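(* Let $w_1, w_2 \geq 0$ with $w_1 + w_2 > 0$. Both for the class of all simultaneous two-player weighted congestion games with affine costs, proportional cost functions and player weights $w_1,w_2$, and for its subclass of network routing games, the price of anarchy (with respect to pure Nash equilibria) is equal to \[ 1 + w_1w_2 \frac{ w_1 + w_2 + \max(w_1,w_2) }{ w_1^3 + w_2^3 + w_1w_2 \min(w_1, w_2) }. \] Moreover, (for $w_1\ge w_2$) this value is attained by the following network routing game: vertices $a,b,c,d,e$; arcs $a\to b$, $a\to c$, $b\to d$, $b\to e$, $c\to d$, $c\to e$, all with $\alpha=0$ and with $\beta_{ab}=w_1w_2+w_2^2$, $\beta_{ac}=w_1w_2$, $\beta_{bd}=\beta_{be}=\beta_{cd}=0$, $\beta_{ce}=w_1^2+w_1w_2+w_2^2$; player 1 (weight $w_1$) routes from $a$ to $d$ and player 2 (weight $w_2$) routes from $a$ to $e$.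
   Context: A weighted two-player congestion game with affine costs consists of a finite set $R$ of resources, coefficients $\alpha_r,\beta_r \geq 0$ for each $r\in R$, two players $i=1,2$ with weights $w_i\ge 0$, and for each player $i$ a nonempty finite set $\mathcal{A}_i \subseteq 2^R$ of actions. For an action profile $A=(A_1,A_2)$ the load of $r$ is $x_r(A)=\sum_{j:\, r\in A_j} w_j$. With proportional costs, player $i$ pays $C_i(A)=w_i\sum_{r\in A_i}(\alpha_r+\beta_r x_r(A))$. The social cost is $C(A)=C_1(A)+C_2(A)$. In a network routing game, $R$ is the arc set of a directed graph, player $i$ has a source $s_i$ and sink $t_i$, and $\mathcal{A}_i$ is the set of arc sets of directed $s_i$–$t_i$ paths. A profile $(A_1^*,A_2^* )$ is a (pure) Nash equilibrium if no player can lower her cost by unilaterally changing her action. The price of anarchy of an instance is the maximum over Nash equilibria $A$ of $C(A)/\min_{A'} C(A')$; the price of anarchy of a class is the supremum over all instances in the class (with positive optimal social cost). *)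

theory Defs
  imports Main "HOL-Library.Extended_Real"
begin

record 'r cgame =
  res   :: "'r set"
  alpha :: "'r \<Rightarrow> real"
  beta  :: "'r \<Rightarrow> real"
  acts1 :: "'r set set"
  acts2 :: "'r set set"

definition valid_game :: "'r cgame \<Rightarrow> bool" where
  "valid_game G \<longleftrightarrow> finite (res G)
     \<and> (\<forall>r\<in>res G. alpha G r \<ge> 0 \<and> beta G r \<ge> 0)
     \<and> acts1 G \<noteq> {} \<and> finite (acts1 G) \<and> (\<forall>A\<in>acts1 G. A \<subseteq> res G)
     \<and> acts2 G \<noteq> {} \<and> finite (acts2 G) \<and> (\<forall>A\<in>acts2 G. A \<subseteq> res G)"

definition load :: "real \<Rightarrow> real \<Rightarrow> 'r set \<Rightarrow> 'r set \<Rightarrow> 'r \<Rightarrow> real" where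
  "load w1 w2 A1 A2 r = (if r \<in> A1 then w1 else 0) + (if r \<in> A2 then w2 else 0)"

definition cost1 :: "'r cgame \<Rightarrow> real \<Rightarrow> real \<Rightarrow> 'r set \<Rightarrow> 'r set \<Rightarrow> real" where
  "cost1 G w1 w2 A1 A2 = w1 * (\<Sum>r\<in>A1. alpha G r + beta G r * load w1 w2 A1 A2 r)"

definition cost2 :: "'r cgame \<Rightarrow> real \<Rightarrow> real \<Rightarrow> 'r set \<Rightarrow> 'r set \<Rightarrow> real" where
  "cost2 G w1 w2 A1 A2 = w2 * (\<Sum>r\<in>A2. alpha G r + beta G r * load w1 w2 A1 A2 r)"

definition social_cost :: "'r cgame \<Rightarrow> real \<Rightarrow> real \<Rightarrow> 'r set \<Rightarrow> 'r set \<Rightarrow> real" where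
  "social_cost G w1 w2 A1 A2 = cost1 G w1 w2 A1 A2 + cost2 G w1 w2 A1 A2"

definition is_NE :: "'r cgame \<Rightarrow> real \<Rightarrow> real \<Rightarrow> 'r set \<Rightarrow> 'r set \<Rightarrow> bool" where
  "is_NE G w1 w2 A1 A2 \<longleftrightarrow> A1 \<in> acts1 G \<and> A2 \<in> acts2 G
     \<and> (\<forall>B\<in>acts1 G. cost1 G w1 w2 A1 A2 \<le> cost1 G w1 w2 B A2)
     \<and> (\<forall>B\<in>acts2 G. cost2 G w1 w2 A1 A2 \<le> cost2 G w1 w2 A1 B)"

definition opt_cost :: "'r cgame \<Rightarrow> real \<Rightarrow> real \<Rightarrow> real" where
  "opt_cost G w1 w2 = Min {social_cost G w1 w2 A1 A2 | A1 A2. A1 \<in> acts1 G \<and> A2 \<in> acts2 G}"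

definition poa_inst :: "'r cgame \<Rightarrow> real \<Rightarrow> real \<Rightarrow> ereal" where
  "poa_inst G w1 w2 = Sup {ereal (social_cost G w1 w2 A1 A2 / opt_cost G w1 w2) | A1 A2. is_NE G w1 w2 A1 A2}"

text \<open>Directed (multi)graphs: arc set E with tail/head maps; simple directed s-t paths
  as lists of arcs with distinct visited vertices.\<close>
definition is_path :: "'e set \<Rightarrow> ('e \<Rightarrow> 'v) \<Rightarrow> ('e \<Rightarrow> 'v) \<Rightarrow> 'v \<Rightarrow> 'v \<Rightarrow> 'e list \<Rightarrow> bool" where
  "is_path E tl' hd' s t es \<longleftrightarrow> set es \<subseteq> E \<and>
     ((es = [] \<and> s = t) \<or>
      (es \<noteq> [] \<and> tl' (hd es) = s \<and> hd' (last es) = t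
        \<and> (\<forall>i. Suc i < length es \<longrightarrow> hd' (es ! i) = tl' (es ! Suc i))
        \<and> distinct (s # map hd' es)))"

definition path_actions :: "'e set \<Rightarrow> ('e \<Rightarrow> 'v) \<Rightarrow> ('e \<Rightarrow> 'v) \<Rightarrow> 'v \<Rightarrow> 'v \<Rightarrow> 'e set set" where
  "path_actions E tl' hd' s t = {set es | es. is_path E tl' hd' s t es}"

definition net_game :: "'e set \<Rightarrow> ('e \<Rightarrow> 'v) \<Rightarrow> ('e \<Rightarrow> 'v) \<Rightarrow> ('e \<Rightarrow> real) \<Rightarrow> ('e \<Rightarrow> real)
     \<Rightarrow> 'v \<Rightarrow> 'v \<Rightarrow> 'v \<Rightarrow> 'v \<Rightarrow> 'e cgame" where
  "net_game E tl' hd' a b s1 t1 s2 t2 =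
     \<lparr>res = E, alpha = a, beta = b,
      acts1 = path_actions E tl' hd' s1 t1, acts2 = path_actions E tl' hd' s2 t2\<rparr>"

text \<open>Class of all games (resources w.l.o.g. of type nat) and network routing games
  (arcs and vertices w.l.o.g. of type nat).\<close>
definition all_games :: "nat cgame set" where
  "all_games = {G. valid_game G}"

definition network_games :: "nat cgame set" where
  "network_games = {G. \<exists>E (tl' :: nat \<Rightarrow> nat) hd' a b s1 t1 s2 t2.
       G = net_game E tl' hd' a b s1 t1 s2 t2 \<and> valid_game G}"

definition poa_class :: "nat cgame set \<Rightarrow> real \<Rightarrow> real \<Rightarrow> ereal" where
  "poa_class C w1 w2 = (SUP G \<in> {G \<in> C. opt_cost G w1 w2 > 0}. poa_inst G w1 w2)"

definition poa_value :: "real \<Rightarrow> real \<Rightarrow> real" where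
  "poa_value w1 w2 = 1 + w1 * w2 * (w1 + w2 + max w1 w2)
                        / (w1 ^ 3 + w2 ^ 3 + w1 * w2 * min w1 w2)"

text \<open>The example network: vertices a,b,c,d,e = 0,1,2,3,4; arcs are pairs (u,v).\<close>
definition ex_arcs :: "(nat \<times> nat) set" where
  "ex_arcs = {(0,1), (0,2), (1,3), (1,4), (2,3), (2,4)}"

definition ex_beta :: "real \<Rightarrow> real \<Rightarrow> nat \<times> nat \<Rightarrow> real" where
  "ex_beta w1 w2 e =
     (if e = (0,1) then w1 * w2 + w2 ^ 2
      else if e = (0,2) then w1 * w2
      else if e = (2,4) then w1 ^ 2 + w1 * w2 + w2 ^ 2
      else 0)"

definition ex_game :: "real \<Rightarrow> real \<Rightarrow> (nat \<times> nat) cgame" where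
  "ex_game w1 w2 = net_game ex_arcs fst snd (\<lambda>_. 0) (ex_beta w1 w2) 0 3 0 4"

end

theory Submission
  imports Defs
begin

definition ind :: "bool \<Rightarrow> real \<Rightarrow> real" where
  "ind b x = (if b then x else 0)"

definition cexpr :: "real \<Rightarrow> real \<Rightarrow> real \<Rightarrow> real \<Rightarrow> bool \<Rightarrow> bool \<Rightarrow> bool \<Rightarrow> bool \<Rightarrow> real" where
  "cexpr p q al be a1 a2 b1 b2 =
    (let D = p^3 + q^3 + p*q*q; N = p*q*(p+q+p) in
    (p+q) * (D * (ind a1 p * (al + be*(ind a1 p + ind a2 q)) + ind a2 q * (al + be*(ind a1 p + ind a2 q)))
       - (D+N) * (ind b1 p * (al + be*(ind b1 p + ind b2 q)) + ind b2 q * (al + be*(ind b1 p + ind b2 q))))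
    + (D+N)*p * (ind b1 p * (al + be*(ind b1 p + ind a2 q)) - ind a1 p * (al + be*(ind a1 p + ind a2 q)))
    + D*(p+q) * (ind b2 q * (al + be*(ind a1 p + ind b2 q)) - ind a2 q * (al + be*(ind a1 p + ind a2 q))))"

lemma core_0000:
  fixes q s al be :: real
  assumes "0 \<le> q" "0 \<le> s" "0 \<le> al" "0 \<le> be"
  shows "cexpr (q+s) q al be False False False False \<le> 0"
proof -
  have e: "cexpr (q+s) q al be False False False False = - (al * (0) + be * (0))"
    unfolding cexpr_def ind_def Let_def by (simp only: if_True if_False) algebra
  have "0 \<le> al * (0) + be * (0)"
    using assms by (simp add: add_nonneg_nonneg mult_nonneg_nonneg zero_le_power)
  then show ?thesis using e by linarith
qed

lemma core_0001:
  fixes q s al be :: real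
  assumes "0 \<le> q" "0 \<le> s" "0 \<le> al" "0 \<le> be"
  shows "cexpr (q+s) q al be False False False True \<le> 0"
proof -
  have e: "cexpr (q+s) q al be False False False True = - (al * (6*q^5 + 13*s*q^4 + 9*s^2*q^3 + 2*s^3*q^2) + be * (6*q^6 + 13*s*q^5 + 9*s^2*q^4 + 2*s^3*q^3))"
    unfolding cexpr_def ind_def Let_def by (simp only: if_True if_False) algebra
  have "0 \<le> al * (6*q^5 + 13*s*q^4 + 9*s^2*q^3 + 2*s^3*q^2) + be * (6*q^6 + 13*s*q^5 + 9*s^2*q^4 + 2*s^3*q^3)"
    using assms by (simp add: add_nonneg_nonneg mult_nonneg_nonneg zero_le_power)
  then show ?thesis using e by linarith
qed

lemma core_0010:
  fixes q s al be :: real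
  assumes "0 \<le> q" "0 \<le> s" "0 \<le> al" "0 \<le> be"
  shows "cexpr (q+s) q al be False False True False \<le> 0"
proof -
  have e: "cexpr (q+s) q al be False False True False = - (al * (6*q^5 + 15*s*q^4 + 14*s^2*q^3 + 6*s^3*q^2 + s^4*q) + be * (6*q^6 + 21*s*q^5 + 29*s^2*q^4 + 20*s^3*q^3 + 7*s^4*q^2 + s^5*q))"
    unfolding cexpr_def ind_def Let_def by (simp only: if_True if_False) algebra
  have "0 \<le> al * (6*q^5 + 15*s*q^4 + 14*s^2*q^3 + 6*s^3*q^2 + s^4*q) + be * (6*q^6 + 21*s*q^5 + 29*s^2*q^4 + 20*s^3*q^3 + 7*s^4*q^2 + s^5*q)"
    using assms by (simp add: add_nonneg_nonneg mult_nonneg_nonneg zero_le_power)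
  then show ?thesis using e by linarith
qed

lemma core_0011:
  fixes q s al be :: real
  assumes "0 \<le> q" "0 \<le> s" "0 \<le> al" "0 \<le> be"
  shows "cexpr (q+s) q al be False False True True \<le> 0"
proof -
  have e: "cexpr (q+s) q al be False False True True = - (al * (12*q^5 + 28*s*q^4 + 23*s^2*q^3 + 8*s^3*q^2 + s^4*q) + be * (36*q^6 + 106*s*q^5 + 124*s^2*q^4 + 74*s^3*q^3 + 23*s^4*q^2 + 3*s^5*q))"
    unfolding cexpr_def ind_def Let_def by (simp only: if_True if_False) algebra
  have "0 \<le> al * (12*q^5 + 28*s*q^4 + 23*s^2*q^3 + 8*s^3*q^2 + s^4*q) + be * (36*q^6 + 106*s*q^5 + 124*s^2*q^4 + 74*s^3*q^3 + 23*s^4*q^2 + 3*s^5*q)"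
    using assms by (simp add: add_nonneg_nonneg mult_nonneg_nonneg zero_le_power)
  then show ?thesis using e by linarith
qed

lemma core_0100:
  fixes q s al be :: real
  assumes "0 \<le> q" "0 \<le> s" "0 \<le> al" "0 \<le> be"
  shows "cexpr (q+s) q al be False True False False \<le> 0"
proof -
  have e: "cexpr (q+s) q al be False True False False = - (al * (0) + be * (0))"
    unfolding cexpr_def ind_def Let_def by (simp only: if_True if_False) algebra
  have "0 \<le> al * (0) + be * (0)"
    using assms by (simp add: add_nonneg_nonneg mult_nonneg_nonneg zero_le_power)
  then show ?thesis using e by linarith
qed

lemma core_0101:
  fixes q s al be :: real
  assumes "0 \<le> q" "0 \<le> s" "0 \<le> al" "0 \<le> be"
  shows "cexpr (q+s) q al be False True False True \<le> 0"
proof -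
  have e: "cexpr (q+s) q al be False True False True = - (al * (6*q^5 + 13*s*q^4 + 9*s^2*q^3 + 2*s^3*q^2) + be * (6*q^6 + 13*s*q^5 + 9*s^2*q^4 + 2*s^3*q^3))"
    unfolding cexpr_def ind_def Let_def by (simp only: if_True if_False) algebra
  have "0 \<le> al * (6*q^5 + 13*s*q^4 + 9*s^2*q^3 + 2*s^3*q^2) + be * (6*q^6 + 13*s*q^5 + 9*s^2*q^4 + 2*s^3*q^3)"
    using assms by (simp add: add_nonneg_nonneg mult_nonneg_nonneg zero_le_power)
  then show ?thesis using e by linarith
qed

lemma core_0110:
  fixes q s al be :: real
  assumes "0 \<le> q" "0 \<le> s" "0 \<le> al" "0 \<le> be"
  shows "cexpr (q+s) q al be False True True False \<le> 0"
proof -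
  have e: "cexpr (q+s) q al be False True True False = - (al * (6*q^5 + 15*s*q^4 + 14*s^2*q^3 + 6*s^3*q^2 + s^4*q) + be * (0))"
    unfolding cexpr_def ind_def Let_def by (simp only: if_True if_False) algebra
  have "0 \<le> al * (6*q^5 + 15*s*q^4 + 14*s^2*q^3 + 6*s^3*q^2 + s^4*q) + be * (0)"
    using assms by (simp add: add_nonneg_nonneg mult_nonneg_nonneg zero_le_power)
  then show ?thesis using e by linarith
qed

lemma core_0111:
  fixes q s al be :: real
  assumes "0 \<le> q" "0 \<le> s" "0 \<le> al" "0 \<le> be"
  shows "cexpr (q+s) q al be False True True True \<le> 0"
proof -
  have e: "cexpr (q+s) q al be False True True True = - (al * (12*q^5 + 28*s*q^4 + 23*s^2*q^3 + 8*s^3*q^2 + s^4*q) + be * (30*q^6 + 85*s*q^5 + 95*s^2*q^4 + 54*s^3*q^3 + 16*s^4*q^2 + 2*s^5*q))"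
    unfolding cexpr_def ind_def Let_def by (simp only: if_True if_False) algebra
  have "0 \<le> al * (12*q^5 + 28*s*q^4 + 23*s^2*q^3 + 8*s^3*q^2 + s^4*q) + be * (30*q^6 + 85*s*q^5 + 95*s^2*q^4 + 54*s^3*q^3 + 16*s^4*q^2 + 2*s^5*q)"
    using assms by (simp add: add_nonneg_nonneg mult_nonneg_nonneg zero_le_power)
  then show ?thesis using e by linarith
qed

lemma core_1000:
  fixes q s al be :: real
  assumes "0 \<le> q" "0 \<le> s" "0 \<le> al" "0 \<le> be"
  shows "cexpr (q+s) q al be True False False False \<le> 0"
proof -
  have e: "cexpr (q+s) q al be True False False False = - (al * (4*s*q^4 + 8*s^2*q^3 + 5*s^3*q^2 + s^4*q) + be * (4*s*q^5 + 12*s^2*q^4 + 13*s^3*q^3 + 6*s^4*q^2 + s^5*q))"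
    unfolding cexpr_def ind_def Let_def by (simp only: if_True if_False) algebra
  have "0 \<le> al * (4*s*q^4 + 8*s^2*q^3 + 5*s^3*q^2 + s^4*q) + be * (4*s*q^5 + 12*s^2*q^4 + 13*s^3*q^3 + 6*s^4*q^2 + s^5*q)"
    using assms by (simp add: add_nonneg_nonneg mult_nonneg_nonneg zero_le_power)
  then show ?thesis using e by linarith
qed

lemma core_1001:
  fixes q s al be :: real
  assumes "0 \<le> q" "0 \<le> s" "0 \<le> al" "0 \<le> be"
  shows "cexpr (q+s) q al be True False False True \<le> 0"
proof -
  have e: "cexpr (q+s) q al be True False False True = - (al * (6*q^5 + 17*s*q^4 + 17*s^2*q^3 + 7*s^3*q^2 + s^4*q) + be * (0))"
    unfolding cexpr_def ind_def Let_def by (simp only: if_True if_False) algebra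
  have "0 \<le> al * (6*q^5 + 17*s*q^4 + 17*s^2*q^3 + 7*s^3*q^2 + s^4*q) + be * (0)"
    using assms by (simp add: add_nonneg_nonneg mult_nonneg_nonneg zero_le_power)
  then show ?thesis using e by linarith
qed

lemma core_1010:
  fixes q s al be :: real
  assumes "0 \<le> q" "0 \<le> s" "0 \<le> al" "0 \<le> be"
  shows "cexpr (q+s) q al be True False True False \<le> 0"
proof -
  have e: "cexpr (q+s) q al be True False True False = - (al * (6*q^5 + 19*s*q^4 + 22*s^2*q^3 + 11*s^3*q^2 + 2*s^4*q) + be * (6*q^6 + 25*s*q^5 + 41*s^2*q^4 + 33*s^3*q^3 + 13*s^4*q^2 + 2*s^5*q))"
    unfolding cexpr_def ind_def Let_def by (simp only: if_True if_False) algebra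
  have "0 \<le> al * (6*q^5 + 19*s*q^4 + 22*s^2*q^3 + 11*s^3*q^2 + 2*s^4*q) + be * (6*q^6 + 25*s*q^5 + 41*s^2*q^4 + 33*s^3*q^3 + 13*s^4*q^2 + 2*s^5*q)"
    using assms by (simp add: add_nonneg_nonneg mult_nonneg_nonneg zero_le_power)
  then show ?thesis using e by linarith
qed

lemma core_1011:
  fixes q s al be :: real
  assumes "0 \<le> q" "0 \<le> s" "0 \<le> al" "0 \<le> be"
  shows "cexpr (q+s) q al be True False True True \<le> 0"
proof -
  have e: "cexpr (q+s) q al be True False True True = - (al * (12*q^5 + 32*s*q^4 + 31*s^2*q^3 + 13*s^3*q^2 + 2*s^4*q) + be * (30*q^6 + 93*s*q^5 + 115*s^2*q^4 + 72*s^3*q^3 + 23*s^4*q^2 + 3*s^5*q))"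
    unfolding cexpr_def ind_def Let_def by (simp only: if_True if_False) algebra
  have "0 \<le> al * (12*q^5 + 32*s*q^4 + 31*s^2*q^3 + 13*s^3*q^2 + 2*s^4*q) + be * (30*q^6 + 93*s*q^5 + 115*s^2*q^4 + 72*s^3*q^3 + 23*s^4*q^2 + 3*s^5*q)"
    using assms by (simp add: add_nonneg_nonneg mult_nonneg_nonneg zero_le_power)
  then show ?thesis using e by linarith
qed

lemma core_1100:
  fixes q s al be :: real
  assumes "0 \<le> q" "0 \<le> s" "0 \<le> al" "0 \<le> be"
  shows "cexpr (q+s) q al be True True False False \<le> 0"
proof -
  have e: "cexpr (q+s) q al be True True False False = - (al * (4*s*q^4 + 8*s^2*q^3 + 5*s^3*q^2 + s^4*q) + be * (8*s*q^5 + 20*s^2*q^4 + 18*s^3*q^3 + 7*s^4*q^2 + s^5*q))"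
    unfolding cexpr_def ind_def Let_def by (simp only: if_True if_False) algebra
  have "0 \<le> al * (4*s*q^4 + 8*s^2*q^3 + 5*s^3*q^2 + s^4*q) + be * (8*s*q^5 + 20*s^2*q^4 + 18*s^3*q^3 + 7*s^4*q^2 + s^5*q)"
    using assms by (simp add: add_nonneg_nonneg mult_nonneg_nonneg zero_le_power)
  then show ?thesis using e by linarith
qed

lemma core_1101:
  fixes q s al be :: real
  assumes "0 \<le> q" "0 \<le> s" "0 \<le> al" "0 \<le> be"
  shows "cexpr (q+s) q al be True True False True \<le> 0"
proof -
  have e: "cexpr (q+s) q al be True True False True = - (al * (6*q^5 + 17*s*q^4 + 17*s^2*q^3 + 7*s^3*q^2 + s^4*q) + be * (4*s*q^5 + 8*s^2*q^4 + 5*s^3*q^3 + s^4*q^2))"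
    unfolding cexpr_def ind_def Let_def by (simp only: if_True if_False) algebra
  have "0 \<le> al * (6*q^5 + 17*s*q^4 + 17*s^2*q^3 + 7*s^3*q^2 + s^4*q) + be * (4*s*q^5 + 8*s^2*q^4 + 5*s^3*q^3 + s^4*q^2)"
    using assms by (simp add: add_nonneg_nonneg mult_nonneg_nonneg zero_le_power)
  then show ?thesis using e by linarith
qed

lemma core_1110:
  fixes q s al be :: real
  assumes "0 \<le> q" "0 \<le> s" "0 \<le> al" "0 \<le> be"
  shows "cexpr (q+s) q al be True True True False \<le> 0"
proof -
  have e: "cexpr (q+s) q al be True True True False = - (al * (6*q^5 + 19*s*q^4 + 22*s^2*q^3 + 11*s^3*q^2 + 2*s^4*q) + be * (8*s*q^5 + 20*s^2*q^4 + 18*s^3*q^3 + 7*s^4*q^2 + s^5*q))"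
    unfolding cexpr_def ind_def Let_def by (simp only: if_True if_False) algebra
  have "0 \<le> al * (6*q^5 + 19*s*q^4 + 22*s^2*q^3 + 11*s^3*q^2 + 2*s^4*q) + be * (8*s*q^5 + 20*s^2*q^4 + 18*s^3*q^3 + 7*s^4*q^2 + s^5*q)"
    using assms by (simp add: add_nonneg_nonneg mult_nonneg_nonneg zero_le_power)
  then show ?thesis using e by linarith
qed

lemma core_1111:
  fixes q s al be :: real
  assumes "0 \<le> q" "0 \<le> s" "0 \<le> al" "0 \<le> be"
  shows "cexpr (q+s) q al be True True True True \<le> 0"
proof -
  have e: "cexpr (q+s) q al be True True True True = - (al * (12*q^5 + 32*s*q^4 + 31*s^2*q^3 + 13*s^3*q^2 + 2*s^4*q) + be * (24*q^6 + 76*s*q^5 + 94*s^2*q^4 + 57*s^3*q^3 + 17*s^4*q^2 + 2*s^5*q))"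
    unfolding cexpr_def ind_def Let_def by (simp only: if_True if_False) algebra
  have "0 \<le> al * (12*q^5 + 32*s*q^4 + 31*s^2*q^3 + 13*s^3*q^2 + 2*s^4*q) + be * (24*q^6 + 76*s*q^5 + 94*s^2*q^4 + 57*s^3*q^3 + 17*s^4*q^2 + 2*s^5*q)"
    using assms by (simp add: add_nonneg_nonneg mult_nonneg_nonneg zero_le_power)
  then show ?thesis using e by linarith
qed


lemma core_all:
  fixes p q al be :: real
  assumes "0 \<le> q" "q \<le> p" "0 \<le> al" "0 \<le> be"
  shows "cexpr p q al be a1 a2 b1 b2 \<le> 0"
proof -
  define s where "s = p - q"
  have s: "0 \<le> s" "p = q + s" using assms by (auto simp: s_def)
  note L = core_0000[OF assms(1) s(1) assms(3,4)] core_0001[OF assms(1) s(1) assms(3,4)]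
    core_0010[OF assms(1) s(1) assms(3,4)] core_0011[OF assms(1) s(1) assms(3,4)]
    core_0100[OF assms(1) s(1) assms(3,4)] core_0101[OF assms(1) s(1) assms(3,4)]
    core_0110[OF assms(1) s(1) assms(3,4)] core_0111[OF assms(1) s(1) assms(3,4)]
    core_1000[OF assms(1) s(1) assms(3,4)] core_1001[OF assms(1) s(1) assms(3,4)]
    core_1010[OF assms(1) s(1) assms(3,4)] core_1011[OF assms(1) s(1) assms(3,4)]
    core_1100[OF assms(1) s(1) assms(3,4)] core_1101[OF assms(1) s(1) assms(3,4)]
    core_1110[OF assms(1) s(1) assms(3,4)] core_1111[OF assms(1) s(1) assms(3,4)]
  show ?thesis unfolding s(2) using L by (cases a1; cases a2; cases b1; cases b2) simp_all
qed

lemma sum_ind: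
  assumes "finite R" "A \<subseteq> R"
  shows "w * (\<Sum>r\<in>A. f r) = (\<Sum>r\<in>R. ind (r \<in> A) w * f r)"
proof -
  have "w * (\<Sum>r\<in>A. f r) = (\<Sum>r\<in>R \<inter> A. w * f r)"
    using assms by (simp add: sum_distrib_left Int_absorb1)
  also have "\<dots> = (\<Sum>r\<in>R. ind (r \<in> A) w * f r)"
    using sum.inter_restrict[OF assms(1), of "\<lambda>r. w * f r" A] by (auto simp: ind_def intro!: sum.cong)
  finally show ?thesis .
qed

lemma lin_comb_sum:
  fixes f g h k u v :: "'a \<Rightarrow> real"
  shows "(\<Sum>r\<in>R. a*(D*(f r + g r) - E*(h r + k r)) + b*(u r - f r) + c*(v r - g r))
    = a*(D*(sum f R + sum g R) - E*(sum h R + sum k R)) + b*(sum u R - sum f R) + c*(sum v R - sum g R)"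
  by (simp add: sum.distrib sum_subtractf sum_distrib_left algebra_simps)

lemma load_ind: "load w1 w2 X Y r = ind (r \<in> X) w1 + ind (r \<in> Y) w2"
  by (simp add: load_def ind_def)

lemma cost1_sum:
  assumes "finite (res G)" "X \<subseteq> res G"
  shows "cost1 G w1 w2 X Y = (\<Sum>r\<in>res G. ind (r \<in> X) w1 *
            (alpha G r + beta G r * (ind (r \<in> X) w1 + ind (r \<in> Y) w2)))"
  unfolding cost1_def load_ind by (rule sum_ind[OF assms])

lemma cost2_sum:
  assumes "finite (res G)" "Y \<subseteq> res G"
  shows "cost2 G w1 w2 X Y = (\<Sum>r\<in>res G. ind (r \<in> Y) w2 *
            (alpha G r + beta G r * (ind (r \<in> X) w1 + ind (r \<in> Y) w2)))"
  unfolding cost2_def load_ind by (rule sum_ind[OF assms])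

lemma pv_ge:
  assumes "w2 \<le> w1"
  shows "poa_value w1 w2 = 1 + (w1*w2*(w1+w2+w1)) / (w1^3 + w2^3 + w1*w2*w2)"
  using assms by (simp add: poa_value_def max_def min_def)

lemma NE_bound:
  assumes G: "valid_game G" and w: "0 \<le> w2" "w2 \<le> w1" "0 < w1"
    and NE: "is_NE G w1 w2 A1 A2" and B: "B1 \<in> acts1 G" "B2 \<in> acts2 G"
  shows "social_cost G w1 w2 A1 A2 \<le> poa_value w1 w2 * social_cost G w1 w2 B1 B2"
proof -
  define D where "D = w1^3 + w2^3 + w1*w2*w2"
  define N where "N = w1*w2*(w1+w2+w1)"
  have Dpos: "D > 0" unfolding D_def using w
    by (simp add: add_pos_nonneg mult_nonneg_nonneg)
  have Nnn: "N \<ge> 0" unfolding N_def using w by simp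
  have pv: "poa_value w1 w2 = 1 + N / D" unfolding D_def N_def using pv_ge[OF w(2)] .
  let ?R = "res G"
  have fin: "finite ?R" using G by (simp add: valid_game_def)
  have A: "A1 \<subseteq> ?R" "A2 \<subseteq> ?R" "B1 \<subseteq> ?R" "B2 \<subseteq> ?R"
    using G NE B by (auto simp: valid_game_def is_NE_def)
  have nn: "\<And>r. r \<in> ?R \<Longrightarrow> 0 \<le> alpha G r \<and> 0 \<le> beta G r"
    using G by (simp add: valid_game_def)
  define SA where "SA = social_cost G w1 w2 A1 A2"
  define SB where "SB = social_cost G w1 w2 B1 B2"
  define c1A where "c1A = cost1 G w1 w2 A1 A2"
  define c2A where "c2A = cost2 G w1 w2 A1 A2"
  define c1d where "c1d = cost1 G w1 w2 B1 A2"
  define c2d where "c2d = cost2 G w1 w2 A1 B2"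
  have key: "(\<Sum>r\<in>?R. cexpr w1 w2 (alpha G r) (beta G r) (r \<in> A1) (r \<in> A2) (r \<in> B1) (r \<in> B2)) \<le> 0"
    by (rule sum_nonpos) (use nn w in \<open>auto intro: core_all\<close>)
  have eq: "(\<Sum>r\<in>?R. cexpr w1 w2 (alpha G r) (beta G r) (r \<in> A1) (r \<in> A2) (r \<in> B1) (r \<in> B2))
     = (w1+w2)*(D*SA - (D+N)*SB) + (D+N)*w1*(c1d - c1A) + D*(w1+w2)*(c2d - c2A)"
    unfolding SA_def SB_def c1A_def c2A_def c1d_def c2d_def social_cost_def
      cost1_sum[OF fin A(1)] cost1_sum[OF fin A(3)] cost2_sum[OF fin A(2)] cost2_sum[OF fin A(4)]
      cexpr_def Let_def D_def[symmetric] N_def[symmetric]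
    by (rule lin_comb_sum)
  have d1: "c1A \<le> c1d" using NE B unfolding is_NE_def c1A_def c1d_def by blast
  have d2: "c2A \<le> c2d" using NE B unfolding is_NE_def c2A_def c2d_def by blast
  have t1: "0 \<le> (D+N)*w1*(c1d - c1A)" using d1 Dpos Nnn w by simp
  have t2: "0 \<le> D*(w1+w2)*(c2d - c2A)" using d2 Dpos w by simp
  have "(w1+w2)*(D*SA - (D+N)*SB) \<le> 0" using key eq t1 t2 by linarith
  then have "D*SA - (D+N)*SB \<le> 0" using w by (simp add: mult_le_0_iff)
  then have h: "SA * D \<le> (D+N) * SB" by (simp add: algebra_simps)
  have e2: "((D+N)/D*SB)*D = (D+N)*SB" using Dpos by (simp add: field_simps)
  have "SA * D \<le> ((D+N)/D * SB) * D" unfolding e2 by (rule h)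
  then have "SA \<le> (D+N)/D * SB" using Dpos by (simp only: mult_le_cancel_right_pos)
  also have "(D+N)/D = 1 + N/D" using Dpos by (simp add: field_simps)
  finally show ?thesis unfolding SA_def SB_def pv .
qed


lemma opt_set_eq:
  "{social_cost G w1 w2 A1 A2 | A1 A2. A1 \<in> acts1 G \<and> A2 \<in> acts2 G}
   = (\<lambda>(x,y). social_cost G w1 w2 x y) ` (acts1 G \<times> acts2 G)"
  by auto

lemma opt_attained:
  assumes "valid_game G"
  shows "\<exists>B1\<in>acts1 G. \<exists>B2\<in>acts2 G. opt_cost G w1 w2 = social_cost G w1 w2 B1 B2"
proof -
  have "finite (acts1 G \<times> acts2 G)" "acts1 G \<times> acts2 G \<noteq> {}"
    using assms by (auto simp: valid_game_def)
  then have "opt_cost G w1 w2 \<in> (\<lambda>(x,y). social_cost G w1 w2 x y) ` (acts1 G \<times> acts2 G)"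
    unfolding opt_cost_def opt_set_eq by (intro Min_in) auto
  then show ?thesis by auto
qed

lemma opt_le:
  assumes "valid_game G" "A1 \<in> acts1 G" "A2 \<in> acts2 G"
  shows "opt_cost G w1 w2 \<le> social_cost G w1 w2 A1 A2"
proof -
  have "finite (acts1 G \<times> acts2 G)"
    using assms by (auto simp: valid_game_def)
  then show ?thesis
    unfolding opt_cost_def opt_set_eq using assms by (intro Min_le) auto
qed

lemma poa_inst_le:
  assumes G: "valid_game G" and w: "0 \<le> w2" "w2 \<le> w1" "0 < w1"
    and opt: "opt_cost G w1 w2 > 0"
  shows "poa_inst G w1 w2 \<le> ereal (poa_value w1 w2)"
  unfolding poa_inst_def
proof (rule Sup_least, clarify)
  fix A1 A2 assume NE: "is_NE G w1 w2 A1 A2"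
  obtain B1 B2 where B: "B1 \<in> acts1 G" "B2 \<in> acts2 G"
    and o: "opt_cost G w1 w2 = social_cost G w1 w2 B1 B2"
    using opt_attained[OF G] by blast
  have "social_cost G w1 w2 A1 A2 \<le> poa_value w1 w2 * opt_cost G w1 w2"
    unfolding o by (rule NE_bound[OF G w NE B])
  then have "social_cost G w1 w2 A1 A2 / opt_cost G w1 w2 \<le> poa_value w1 w2"
    using opt by (simp add: pos_divide_le_eq)
  then show "ereal (social_cost G w1 w2 A1 A2 / opt_cost G w1 w2) \<le> ereal (poa_value w1 w2)"
    by simp
qed

definition sw :: "'r cgame \<Rightarrow> 'r cgame" where
  "sw G = G\<lparr>acts1 := acts2 G, acts2 := acts1 G\<rparr>"

lemma sw_sw[simp]: "sw (sw G) = G" by (simp add: sw_def)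

lemma load_sw: "load w1 w2 A1 A2 = load w2 w1 A2 A1"
  by (auto simp: load_def fun_eq_iff)

lemma cost1_sw: "cost1 (sw G) w1 w2 A1 A2 = cost2 G w2 w1 A2 A1"
  by (simp add: cost1_def cost2_def sw_def load_sw)

lemma cost2_sw: "cost2 (sw G) w1 w2 A1 A2 = cost1 G w2 w1 A2 A1"
  by (simp add: cost1_def cost2_def sw_def load_sw)

lemma sc_sw: "social_cost (sw G) w1 w2 A1 A2 = social_cost G w2 w1 A2 A1"
  by (simp add: social_cost_def cost1_sw cost2_sw)

lemma NE_sw: "is_NE (sw G) w1 w2 A1 A2 \<longleftrightarrow> is_NE G w2 w1 A2 A1"
  unfolding is_NE_def cost1_sw cost2_sw by (auto simp: sw_def)

lemma opt_sw: "opt_cost (sw G) w1 w2 = opt_cost G w2 w1"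
proof -
  have "{social_cost (sw G) w1 w2 A1 A2 | A1 A2. A1 \<in> acts1 (sw G) \<and> A2 \<in> acts2 (sw G)}
      = {social_cost G w2 w1 A1 A2 | A1 A2. A1 \<in> acts1 G \<and> A2 \<in> acts2 G}"
    unfolding sc_sw by (auto simp: sw_def)
  then show ?thesis unfolding opt_cost_def by simp
qed

lemma poa_inst_sw: "poa_inst (sw G) w1 w2 = poa_inst G w2 w1"
proof -
  have "{ereal (social_cost (sw G) w1 w2 A1 A2 / opt_cost (sw G) w1 w2) | A1 A2. is_NE (sw G) w1 w2 A1 A2}
      = {ereal (social_cost G w2 w1 A1 A2 / opt_cost G w2 w1) | A1 A2. is_NE G w2 w1 A1 A2}"
    unfolding sc_sw opt_sw NE_sw by blast
  then show ?thesis unfolding poa_inst_def by simp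
qed

lemma valid_sw: "valid_game (sw G) \<longleftrightarrow> valid_game G"
  by (auto simp: valid_game_def sw_def)

lemma poa_class_sw:
  assumes "\<And>G. G \<in> C \<Longrightarrow> sw G \<in> C"
  shows "poa_class C w1 w2 = poa_class C w2 w1"
proof -
  have "{G \<in> C. opt_cost G w1 w2 > 0} = sw ` {G \<in> C. opt_cost G w2 w1 > 0}"
  proof
    show "{G \<in> C. opt_cost G w1 w2 > 0} \<subseteq> sw ` {G \<in> C. opt_cost G w2 w1 > 0}"
    proof
      fix G assume "G \<in> {G \<in> C. opt_cost G w1 w2 > 0}"
      then have "sw G \<in> {G \<in> C. opt_cost G w2 w1 > 0}" using assms by (simp add: opt_sw)
      then show "G \<in> sw ` {G \<in> C. opt_cost G w2 w1 > 0}" by (metis image_eqI sw_sw)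
    qed
    show "sw ` {G \<in> C. opt_cost G w2 w1 > 0} \<subseteq> {G \<in> C. opt_cost G w1 w2 > 0}"
      using assms by (auto simp: opt_sw)
  qed
  then show ?thesis unfolding poa_class_def by (simp add: image_comp poa_inst_sw o_def)
qed

lemma all_sw: "G \<in> all_games \<Longrightarrow> sw G \<in> all_games"
  by (simp add: all_games_def valid_sw)

lemma net_game_sw: "sw (net_game E tl' hd' a b s1 t1 s2 t2) = net_game E tl' hd' a b s2 t2 s1 t1"
  by (simp add: sw_def net_game_def)

lemma net_sw: "G \<in> network_games \<Longrightarrow> sw G \<in> network_games"
  unfolding network_games_def
  apply clarify
  subgoal for E tl' hd' a b s1 t1 s2 t2
    apply (rule exI[of _ E], rule exI[of _ tl'], rule exI[of _ hd'], rule exI[of _ a], rule exI[of _ b])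
    apply (rule exI[of _ s2], rule exI[of _ t2], rule exI[of _ s1], rule exI[of _ t1])
    using valid_sw[of "net_game E tl' hd' a b s1 t1 s2 t2"] by (simp add: net_game_sw)
  done

lemma poa_value_sym: "poa_value w1 w2 = poa_value w2 w1"
  by (simp add: poa_value_def max.commute min.commute algebra_simps)

lemma class_le:
  assumes "\<And>G. G \<in> C \<Longrightarrow> valid_game G" "0 \<le> w2" "w2 \<le> w1" "0 < w1"
  shows "poa_class C w1 w2 \<le> ereal (poa_value w1 w2)"
  unfolding poa_class_def
  by (rule SUP_least) (use assms poa_inst_le in auto)

lemma class_ge:
  assumes "G \<in> C" "opt_cost G w1 w2 > 0" "poa_inst G w1 w2 \<ge> x"
  shows "poa_class C w1 w2 \<ge> x"
  unfolding poa_class_def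
  by (rule SUP_upper2[of G]) (use assms in auto)


locale exg =
  fixes E :: "'e set" and tl' hd' :: "'e \<Rightarrow> nat" and eab eac ebd ebe ecd ece :: 'e
  assumes E: "E = {eab,eac,ebd,ebe,ecd,ece}"
   and tls: "tl' eab = 0" "tl' eac = 0" "tl' ebd = 1" "tl' ebe = 1" "tl' ecd = 2" "tl' ece = 2"
   and hds: "hd' eab = 1" "hd' eac = 2" "hd' ebd = 3" "hd' ebe = 4" "hd' ecd = 3" "hd' ece = 4"
begin

lemma dist: "eab \<noteq> eac" "eab \<noteq> ebd" "eab \<noteq> ebe" "eab \<noteq> ecd" "eab \<noteq> ece"
  "eac \<noteq> ebd" "eac \<noteq> ebe" "eac \<noteq> ecd" "eac \<noteq> ece"
  "ebd \<noteq> ebe" "ebd \<noteq> ecd" "ebd \<noteq> ece" "ebe \<noteq> ecd" "ebe \<noteq> ece" "ecd \<noteq> ece"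
  using tls hds by auto

lemma path_two:
  assumes t: "t = 3 \<or> t = 4"
   and P: "is_path E tl' hd' 0 t es"
  shows "\<exists>x y. es = [x,y] \<and> x \<in> E \<and> y \<in> E \<and> tl' x = 0 \<and> hd' x = tl' y \<and> hd' y = t"
proof -
  from P t have sub: "set es \<subseteq> E" and ne: "es \<noteq> []" and h: "tl' (hd es) = 0"
    and l: "hd' (last es) = t"
    and ch: "\<forall>i. Suc i < length es \<longrightarrow> hd' (es!i) = tl' (es ! Suc i)"
    unfolding is_path_def by auto
  obtain x xs where es: "es = x # xs" using ne by (cases es) auto
  have x: "x \<in> E" "tl' x = 0" using sub h es by auto
  have hx: "hd' x = 1 \<or> hd' x = 2" using x E tls hds by auto
  have "xs \<noteq> []"
  proof
    assume "xs = []" then have "hd' x = t" using l es by simp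
    with hx t show False by auto
  qed
  then obtain y ys where xs: "xs = y # ys" by (cases xs) auto
  have y: "y \<in> E" using sub es xs by auto
  have xy: "hd' x = tl' y" using ch[rule_format, of 0] es xs by simp
  have hy: "hd' y = 3 \<or> hd' y = 4" using y xy hx E tls hds by auto
  have "ys = []"
  proof (rule ccontr)
    assume "ys \<noteq> []" then obtain z zs where ys: "ys = z # zs" by (cases ys) auto
    have "z \<in> E" using sub es xs ys by auto
    moreover have "hd' y = tl' z" using ch[rule_format, of 1] es xs ys by simp
    ultimately show False using hy E tls hds by auto
  qed
  then show ?thesis using es xs x y xy l by auto
qed

lemma two_path:
  assumes "x \<in> E" "y \<in> E" "tl' x = 0" "hd' x = tl' y" "hd' y = t" "distinct [0, hd' x, hd' y]"
  shows "is_path E tl' hd' 0 t [x,y]"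
  using assms unfolding is_path_def by (auto simp: less_Suc_eq)

lemma first_arc: "x \<in> E \<Longrightarrow> tl' x = 0 \<Longrightarrow> x = eab \<or> x = eac"
  using E tls by auto

lemma second_arc: "y \<in> E \<Longrightarrow> tl' y = T \<Longrightarrow> hd' y = H \<Longrightarrow> (T = 1 \<or> T = 2) \<Longrightarrow>
    (y = ebd \<and> T = 1 \<and> H = 3) \<or> (y = ebe \<and> T = 1 \<and> H = 4) \<or> (y = ecd \<and> T = 2 \<and> H = 3) \<or> (y = ece \<and> T = 2 \<and> H = 4)"
  using E tls hds by auto

lemma acts_gen:
  assumes "t = 3 \<or> t = 4"
  shows "path_actions E tl' hd' 0 t = {{eab, if t = 3 then ebd else ebe},{eac, if t = 3 then ecd else ece}}"
proof
  show "path_actions E tl' hd' 0 t \<subseteq> {{eab, if t = 3 then ebd else ebe},{eac, if t = 3 then ecd else ece}}"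
  proof
    fix A assume "A \<in> path_actions E tl' hd' 0 t"
    then obtain es where es: "A = set es" "is_path E tl' hd' 0 t es" by (auto simp: path_actions_def)
    obtain x y where xy0: "es = [x,y]" and xy: "x \<in> E" "y \<in> E" "tl' x = 0" "hd' x = tl' y" "hd' y = t"
      using path_two[OF assms es(2)] by blast
    have A: "A = {x,y}" using es(1) xy0 by simp
    from first_arc[OF xy(1,3)] have "x = eab \<and> hd' x = 1 \<or> x = eac \<and> hd' x = 2" using hds by auto
    then show "A \<in> {{eab, if t = 3 then ebd else ebe},{eac, if t = 3 then ecd else ece}}"
    proof
      assume x: "x = eab \<and> hd' x = 1"
      have "y = (if t = 3 then ebd else ebe)"
        using second_arc[OF xy(2) refl refl] x xy(4,5) assms by auto
      then show ?thesis using A x by simp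
    next
      assume x: "x = eac \<and> hd' x = 2"
      have "y = (if t = 3 then ecd else ece)"
        using second_arc[OF xy(2) refl refl] x xy(4,5) assms by auto
      then show ?thesis using A x by simp
    qed
  qed
  have "is_path E tl' hd' 0 t [eab, if t = 3 then ebd else ebe]"
    by (rule two_path) (use E tls hds assms in auto)
  moreover have "is_path E tl' hd' 0 t [eac, if t = 3 then ecd else ece]"
    by (rule two_path) (use E tls hds assms in auto)
  ultimately have "set [eab, if t = 3 then ebd else ebe] \<in> path_actions E tl' hd' 0 t"
     "set [eac, if t = 3 then ecd else ece] \<in> path_actions E tl' hd' 0 t"
    unfolding path_actions_def by blast+
  then show "{{eab, if t = 3 then ebd else ebe},{eac, if t = 3 then ecd else ece}} \<subseteq> path_actions E tl' hd' 0 t"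
    by simp
qed

lemma acts3: "path_actions E tl' hd' 0 3 = {{eab,ebd},{eac,ecd}}"
  using acts_gen[of 3] by simp

lemma acts4: "path_actions E tl' hd' 0 4 = {{eab,ebe},{eac,ece}}"
  using acts_gen[of 4] by simp

lemma ex_main:
  fixes w1 w2 :: real and b :: "'e \<Rightarrow> real"
  assumes bv: "b eab = w1*w2+w2^2" "b eac = w1*w2" "b ebd = 0" "b ebe = 0" "b ecd = 0"
      "b ece = w1^2+w1*w2+w2^2"
   and w: "0 < w2" "w2 \<le> w1"
   and G: "G = net_game E tl' hd' (\<lambda>_. 0) b 0 3 0 4"
  shows "valid_game G \<and> opt_cost G w1 w2 > 0 \<and> poa_inst G w1 w2 = ereal (poa_value w1 w2)"
proof -
  define P1 where "P1 = {eab,ebd}"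
  define Q1 where "Q1 = {eac,ecd}"
  define P2 where "P2 = {eab,ebe}"
  define Q2 where "Q2 = {eac,ece}"
  have a1: "acts1 G = {P1,Q1}" using G acts3 by (simp add: net_game_def P1_def Q1_def)
  have a2: "acts2 G = {P2,Q2}" using G acts4 by (simp add: net_game_def P2_def Q2_def)
  have rG: "res G = E" "alpha G = (\<lambda>_. 0)" "beta G = b" by (simp_all add: G net_game_def)
  have w1: "0 < w1" using w by linarith
  have bnn: "\<forall>r\<in>E. 0 \<le> b r" using E bv w1 w by (auto intro: add_nonneg_nonneg mult_nonneg_nonneg)
  have valid: "valid_game G" unfolding valid_game_def using a1 a2 rG E bnn
    by (auto simp: P1_def Q1_def P2_def Q2_def)
  note defs = social_cost_def cost1_def cost2_def rG load_def dist dist[THEN not_sym] bv P1_def Q1_def P2_def Q2_def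
  have s11: "social_cost G w1 w2 P1 P2 = w2*(w1+w2)^3" by (simp add: defs) algebra
  have s12: "social_cost G w1 w2 P1 Q2 = w2*(w1^3+w2^3+2*w1^2*w2+2*w1*w2^2)" by (simp add: defs) algebra
  have s21: "social_cost G w1 w2 Q1 P2 = w2*(w1^3+w1*w2^2+w2^3)" by (simp add: defs) algebra
  have s22: "social_cost G w1 w2 Q1 Q2 = w1*w2*(w1+w2)^2 + w2^2*(w1^2+w1*w2+w2^2)" by (simp add: defs) algebra
  have p11: "social_cost G w1 w2 P1 P2 > 0" unfolding s11 using w w1 by simp
  have p12: "social_cost G w1 w2 P1 Q2 > 0" unfolding s12 using w w1 by (simp add: add_pos_pos)
  have p21: "social_cost G w1 w2 Q1 P2 > 0" unfolding s21 using w w1 by (simp add: add_pos_pos)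
  have p22: "social_cost G w1 w2 Q1 Q2 > 0" unfolding s22 using w w1 by (simp add: add_pos_pos)
  have opt_pos: "opt_cost G w1 w2 > 0"
    using opt_attained[OF valid, of w1 w2] a1 a2 p11 p12 p21 p22 by auto
  have opt_le': "opt_cost G w1 w2 \<le> social_cost G w1 w2 Q1 P2"
    by (rule opt_le[OF valid]) (simp_all add: a1 a2)
  have e1: "cost1 G w1 w2 P1 Q2 = cost1 G w1 w2 Q1 Q2" by (simp add: defs) algebra
  have e2: "cost2 G w1 w2 P1 Q2 = cost2 G w1 w2 P1 P2" by (simp add: defs) algebra
  have NE: "is_NE G w1 w2 P1 Q2" unfolding is_NE_def a1 a2 using e1 e2 by auto
  have rho: "social_cost G w1 w2 P1 Q2 / social_cost G w1 w2 Q1 P2 = poa_value w1 w2"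
  proof -
    define D where "D = w1^3+w1*w2^2+w2^3"
    define N where "N = w1*w2*(w1+w2+w1)"
    have D: "D > 0" using w w1 unfolding D_def by (simp add: add_pos_pos)
    have x1: "w2*(w1^3+w2^3+2*w1^2*w2+2*w1*w2^2) = w2*(D+N)" unfolding D_def N_def by algebra
    have x2: "w2*(w1^3+w1*w2^2+w2^3) = w2*D" unfolding D_def by simp
    have x3: "w1^3 + w2^3 + w1*w2*w2 = D" unfolding D_def by algebra
    have "w2*(D+N) / (w2*D) = 1 + N/D" using D w by (simp add: field_simps)
    then show ?thesis unfolding s12 s21 pv_ge[OF w(2)] x1 x2 x3 N_def[symmetric] .
  qed
  have "ereal (poa_value w1 w2) \<le> ereal (social_cost G w1 w2 P1 Q2 / opt_cost G w1 w2)"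
    unfolding rho[symmetric] using opt_pos opt_le' p12 by (simp add: divide_left_mono)
  also have "\<dots> \<le> poa_inst G w1 w2"
    unfolding poa_inst_def using NE by (intro Sup_upper) blast
  finally have ge: "ereal (poa_value w1 w2) \<le> poa_inst G w1 w2" .
  have le: "poa_inst G w1 w2 \<le> ereal (poa_value w1 w2)"
    by (rule poa_inst_le[OF valid _ w(2) w1 opt_pos]) (use w in simp)
  show ?thesis using valid opt_pos ge le by simp
qed

end


lemma ex_game_thm:
  assumes "0 < w2" "w2 \<le> w1"
  shows "valid_game (ex_game w1 w2) \<and> opt_cost (ex_game w1 w2) w1 w2 > 0
           \<and> poa_inst (ex_game w1 w2) w1 w2 = ereal (poa_value w1 w2)"
proof -
  interpret exg ex_arcs fst snd "(0,1)" "(0,2)" "(1,3)" "(1,4)" "(2,3)" "(2,4)"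
    by unfold_locales (simp_all add: ex_arcs_def)
  show ?thesis
    by (rule ex_main[of "ex_beta w1 w2"]) (use assms in \<open>simp_all add: ex_beta_def ex_game_def\<close>)
qed

definition nat_beta :: "real \<Rightarrow> real \<Rightarrow> nat \<Rightarrow> real" where
  "nat_beta w1 w2 e = ex_beta w1 w2 (e div 5, e mod 5)"

definition nat_game :: "real \<Rightarrow> real \<Rightarrow> nat cgame" where
  "nat_game w1 w2 = net_game {1,2,8,9,13,14} (\<lambda>e. e div 5) (\<lambda>e. e mod 5) (\<lambda>_. 0) (nat_beta w1 w2) 0 3 0 4"

lemma nat_game_thm:
  assumes "0 < w2" "w2 \<le> w1"
  shows "valid_game (nat_game w1 w2) \<and> opt_cost (nat_game w1 w2) w1 w2 > 0
           \<and> poa_inst (nat_game w1 w2) w1 w2 = ereal (poa_value w1 w2)"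
proof -
  interpret exg "{1,2,8,9,13,14}" "\<lambda>e::nat. e div 5" "\<lambda>e::nat. e mod 5" 1 2 8 9 13 14
    by unfold_locales simp_all
  show ?thesis
    by (rule ex_main[of "nat_beta w1 w2"]) (use assms in \<open>simp_all add: nat_beta_def ex_beta_def nat_game_def\<close>)
qed

definition triv_game :: "nat cgame" where
  "triv_game = net_game {0} (\<lambda>_. 0::nat) (\<lambda>_. 1) (\<lambda>_. 0) (\<lambda>_. 1) 0 1 0 1"

lemma triv_acts: "path_actions {0::nat} (\<lambda>_. 0::nat) (\<lambda>_. 1) 0 1 = {{0}}"
proof
  show "path_actions {0::nat} (\<lambda>_. 0::nat) (\<lambda>_. 1) 0 1 \<subseteq> {{0}}"
  proof
    fix A assume "A \<in> path_actions {0::nat} (\<lambda>_. 0::nat) (\<lambda>_. 1) 0 1"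
    then obtain es where es: "A = set es" "is_path {0::nat} (\<lambda>_. 0::nat) (\<lambda>_. 1) 0 1 es"
      by (auto simp: path_actions_def)
    then have ne: "es \<noteq> []" and sub: "set es \<subseteq> {0}" and d: "distinct (0 # map (\<lambda>_. 1::nat) es)"
      unfolding is_path_def by auto
    obtain x xs where xs: "es = x # xs" using ne by (cases es) auto
    have "xs = []" using d xs by (cases xs) auto
    then show "A \<in> {{0}}" using xs sub es(1) by auto
  qed
  have "is_path {0::nat} (\<lambda>_. 0::nat) (\<lambda>_. 1) 0 1 [0]" by (simp add: is_path_def)
  then show "{{0}} \<subseteq> path_actions {0::nat} (\<lambda>_. 0::nat) (\<lambda>_. 1) 0 1"
    unfolding path_actions_def by (metis (mono_tags, lifting) empty_set list.simps(15) mem_Collect_eq singletonD subsetI)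
qed

lemma triv_thm:
  assumes "0 \<le> w1" "0 \<le> w2" "0 < w1 + w2"
  shows "valid_game triv_game \<and> opt_cost triv_game w1 w2 > 0 \<and> poa_inst triv_game w1 w2 \<ge> ereal 1"
proof -
  have a: "acts1 triv_game = {{0}}" "acts2 triv_game = {{0}}" "res triv_game = {0}"
    "alpha triv_game = (\<lambda>_. 0)" "beta triv_game = (\<lambda>_. 1)"
    by (simp_all add: triv_game_def net_game_def triv_acts[simplified])
  have valid: "valid_game triv_game" by (simp add: valid_game_def a)
  have sc: "social_cost triv_game w1 w2 {0} {0} = (w1+w2)^2"
    by (simp add: social_cost_def cost1_def cost2_def load_def a power2_eq_square algebra_simps)
  have opt: "opt_cost triv_game w1 w2 = (w1+w2)^2"
    unfolding opt_cost_def a sc[symmetric] by simp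
  have pos: "(w1+w2)^2 > 0" using assms by simp
  have NE: "is_NE triv_game w1 w2 {0} {0}" by (simp add: is_NE_def a)
  have "ereal (social_cost triv_game w1 w2 {0} {0} / opt_cost triv_game w1 w2) \<le> poa_inst triv_game w1 w2"
    unfolding poa_inst_def using NE by (intro Sup_upper) blast
  then have "ereal 1 \<le> poa_inst triv_game w1 w2" unfolding sc opt using pos by simp
  then show ?thesis using valid opt pos by simp
qed

lemma key:
  assumes "0 \<le> q" "q \<le> p" "0 < p"
  shows "poa_class all_games p q = ereal (poa_value p q) \<and> poa_class network_games p q = ereal (poa_value p q)"
proof -
  have up1: "poa_class all_games p q \<le> ereal (poa_value p q)"
    by (rule class_le) (use assms in \<open>auto simp: all_games_def\<close>)
  have up2: "poa_class network_games p q \<le> ereal (poa_value p q)"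
    by (rule class_le) (use assms in \<open>auto simp: network_games_def\<close>)
  obtain G where G: "G \<in> network_games" "opt_cost G p q > 0" "poa_inst G p q \<ge> ereal (poa_value p q)"
  proof (cases "q = 0")
    case True
    have "poa_value p q = 1" using True by (simp add: poa_value_def)
    moreover have "triv_game \<in> network_games"
    proof -
      have v: "valid_game triv_game" using triv_thm[of p q] assms by simp
      show ?thesis unfolding network_games_def using v unfolding triv_game_def by blast
    qed
    ultimately show ?thesis using that[of triv_game] triv_thm[of p q] assms by simp
  next
    case False
    then have q: "0 < q" using assms by simp
    have "nat_game p q \<in> network_games"
    proof -
      have v: "valid_game (nat_game p q)" using nat_game_thm[OF q assms(2)] by simp
      show ?thesis unfolding network_games_def using v unfolding nat_game_def by blast
    qed
    then show ?thesis using that[of "nat_game p q"] nat_game_thm[OF q assms(2)] by simp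
  qed
  have Ga: "G \<in> all_games" using G(1) by (auto simp: network_games_def all_games_def)
  have lo1: "poa_class all_games p q \<ge> ereal (poa_value p q)" by (rule class_ge[OF Ga G(2,3)])
  have lo2: "poa_class network_games p q \<ge> ereal (poa_value p q)" by (rule class_ge[OF G])
  show ?thesis using up1 up2 lo1 lo2 by simp
qed

theorem theorem2:
  fixes w1 w2 :: real
  assumes "w1 \<ge> 0" and "w2 \<ge> 0" and "w1 + w2 > 0"
  shows "poa_class all_games w1 w2 = ereal (poa_value w1 w2)
       \<and> poa_class network_games w1 w2 = ereal (poa_value w1 w2)
       \<and> (w1 \<ge> w2 \<and> w2 > 0 \<longrightarrow>
           valid_game (ex_game w1 w2) \<and> opt_cost (ex_game w1 w2) w1 w2 > 0
           \<and> poa_inst (ex_game w1 w2) w1 w2 = ereal (poa_value w1 w2))"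
proof -
  have main: "poa_class all_games w1 w2 = ereal (poa_value w1 w2)
       \<and> poa_class network_games w1 w2 = ereal (poa_value w1 w2)"
  proof (cases "w2 \<le> w1")
    case True
    then show ?thesis using key[of w2 w1] assms by simp
  next
    case False
    then have "poa_class all_games w2 w1 = ereal (poa_value w2 w1)
       \<and> poa_class network_games w2 w1 = ereal (poa_value w2 w1)" using key[of w1 w2] assms by simp
    then show ?thesis
      using poa_class_sw[of all_games, OF all_sw] poa_class_sw[of network_games, OF net_sw]
        poa_value_sym[of w1 w2] by metis
  qed
  show ?thesis using main ex_game_thm by blast
qed

end
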